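(* Suppose that for every $\theta\in\Theta$, $u_\theta:\mathbb R^{d_x}\to\mathbb R$ is concave and differentiable with $\|\nabla u_\theta(x)\|\le B_u$ for all $x$ and $\nabla u_\theta$ $L_u$-Lipschitz, and that $\beta_{\max}L_u<1$. Then for all $\beta,\beta'\in[\beta_{\min},\beta_{\max}]$ and $\theta\in\Theta$, $$\mathcal W(\mathcal D_\beta(\theta),\mathcal D_{\beta'}(\theta))\le\frac{B_u}{1-\beta_{\max}L_u}|\beta-\beta'|,$$ i.e. the atlas is $\epsilon_W$-smooth in Wasserstein distance with $\epsilon_W\le B_u/(1-\beta_{\max}L_u)$.
   Context: Strategic regression: $0<\beta_{\min}\le\beta_{\max}$. For $\beta\in[\beta_{\min},\beta_{\max}]$, $\theta\in\Theta$, and $x_0\in\mathbb R^{d_x}$, the best response is $g_\beta(x_0,\theta)=\arg\max_{x\in\mathbb R^{d_x}}\big(u_\theta(x)-\frac{1}{2\beta}\|x-x_0\|^2\big)$. Given a base distribution $\mathcal D_0$ of feature–label pairs $(x_0,y)$, the atlas is defined by: $(x,y)\sim\mathcal D_\beta(\theta)$ iff $(x_0,y)\sim\mathcal D_0$ and $x=g_\beta(x_0,\theta)$. $\mathcal W$ denotes the Wasserstein-1 distance (Euclidean norm on $(x,y)$). *)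

theory Defs
  imports "HOL-Probability.Probability"
begin

definition best_response :: "real \<Rightarrow> ('a::real_normed_vector \<Rightarrow> real) \<Rightarrow> 'a \<Rightarrow> 'a" where
  "best_response \<beta> u x0 =
     (SOME x. \<forall>z. u z - (1 / (2 * \<beta>)) * (norm (z - x0))\<^sup>2 \<le> u x - (1 / (2 * \<beta>)) * (norm (x - x0))\<^sup>2)"

definition atlas :: "real \<Rightarrow> ('a::euclidean_space \<Rightarrow> real) \<Rightarrow> ('a \<times> 'b::euclidean_space) measure
                      \<Rightarrow> ('a \<times> 'b) measure" where
  "atlas \<beta> u D0 = distr D0 borel (\<lambda>(x0, y). (best_response \<beta> u x0, y))"

definition couplings :: "'c::euclidean_space measure \<Rightarrow> 'c measure \<Rightarrow> ('c \<times> 'c) measure set" where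
  "couplings \<mu> \<nu> = {\<pi>. prob_space \<pi> \<and> sets \<pi> = sets borel \<and>
                        distr \<pi> borel fst = \<mu> \<and> distr \<pi> borel snd = \<nu>}"

definition wasserstein1 :: "'c::euclidean_space measure \<Rightarrow> 'c measure \<Rightarrow> ennreal" where
  "wasserstein1 \<mu> \<nu> = (INF \<pi>\<in>couplings \<mu> \<nu>. \<integral>\<^sup>+ p. ennreal (dist (fst p) (snd p)) \<partial>\<pi>)"

end

theory Submission
  imports Defs
begin

lemma concave_grad_ineq:
  fixes f :: "'a::real_inner \<Rightarrow> real"
  assumes cv: "concave_on UNIV f" and gd: "GDERIV f x :> g"
  shows "f z \<le> f x + g \<bullet> (z - x)"
proof -
  define h where "h = z - x"
  define \<phi> where "\<phi> = (\<lambda>t::real. f (x + t *\<^sub>R h))"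
  have d: "(\<phi> has_real_derivative (g \<bullet> h)) (at 0)"
  proof -
    have 1: "((\<lambda>t::real. x + t *\<^sub>R h) has_derivative (\<lambda>t. t *\<^sub>R h)) (at 0)"
      by (auto intro!: derivative_eq_intros)
    have 2: "(f has_derivative (\<lambda>v. v \<bullet> g)) (at (x + 0 *\<^sub>R h))"
      using gd by (simp add: gderiv_def)
    have "(\<phi> has_derivative (\<lambda>t. (t *\<^sub>R h) \<bullet> g)) (at 0)"
      unfolding \<phi>_def using has_derivative_compose[OF 1 2] by (simp add: o_def)
    moreover have "(\<lambda>t. (t *\<^sub>R h) \<bullet> g) = (\<lambda>t. t * (g \<bullet> h))" by (auto simp: inner_commute)
    moreover have "(\<lambda>t. t * (g \<bullet> h)) = (*) (g \<bullet> h)" by (auto simp: mult.commute)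
    ultimately show ?thesis unfolding has_field_derivative_def by metis
  qed
  have lim: "((\<lambda>t. (\<phi> t - \<phi> 0)/(t - 0)) \<longlongrightarrow> g \<bullet> h) (at_right 0)"
    using d unfolding has_field_derivative_iff filterlim_at_split by simp
  have ev: "eventually (\<lambda>t. f z - f x \<le> (\<phi> t - \<phi> 0)/(t-0)) (at_right 0)"
    unfolding eventually_at_right_field
  proof (intro exI[of _ 1] conjI allI impI)
    fix t :: real assume t: "0 < t" "t < 1"
    have "(1 - t) * f x + t * f z \<le> f ((1 - t) *\<^sub>R x + t *\<^sub>R z)"
      using concave_onD[OF cv, of t x z] t by simp
    moreover have "(1 - t) *\<^sub>R x + t *\<^sub>R z = x + t *\<^sub>R h" by (simp add: h_def algebra_simps)
    ultimately have "t * (f z - f x) \<le> \<phi> t - \<phi> 0" by (simp add: \<phi>_def algebra_simps)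
    then show "f z - f x \<le> (\<phi> t - \<phi> 0)/(t-0)" using t by (simp add: field_simps)
  qed simp
  have "f z - f x \<le> g \<bullet> h" by (rule tendsto_lowerbound[OF lim ev]) simp
  then show ?thesis by (simp add: h_def)
qed

lemma norm_add_sq: "(norm (a + b))\<^sup>2 = (norm a)\<^sup>2 + 2 * (a \<bullet> b) + (norm (b::'a::real_inner))\<^sup>2"
  unfolding power2_norm_eq_inner by (simp add: inner_add_left inner_add_right inner_commute)

lemma fixpoint_max:
  fixes f :: "'a::real_inner \<Rightarrow> real"
  assumes cv: "concave_on UNIV f" and gd: "\<forall>x. GDERIV f x :> g x" and b: "0 < \<beta>"
    and fx: "x = x0 + \<beta> *\<^sub>R g x"
  shows "f z - (1 / (2 * \<beta>)) * (norm (z - x0))\<^sup>2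
     \<le> f x - (1 / (2 * \<beta>)) * (norm (x - x0))\<^sup>2 - (1 / (2 * \<beta>)) * (norm (z - x))\<^sup>2"
proof -
  have t: "f z \<le> f x + g x \<bullet> (z - x)" using concave_grad_ineq[OF cv] gd by blast
  have "x - x0 = \<beta> *\<^sub>R g x" using fx by (simp add: algebra_simps)
  then have gx: "g x = (1/\<beta>) *\<^sub>R (x - x0)" using b by simp
  have e: "z - x0 = (x - x0) + (z - x)" by simp
  have n: "(norm (z - x0))\<^sup>2 = (norm (x - x0))\<^sup>2 + 2 * ((x - x0) \<bullet> (z - x)) + (norm (z - x))\<^sup>2"
    using norm_add_sq[of "x - x0" "z - x"] by simp
  have "g x \<bullet> (z - x) = (1/\<beta>) * ((x - x0) \<bullet> (z - x))" by (simp add: gx)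
  then have dd: "(x - x0) \<bullet> (z - x) = \<beta> * (g x \<bullet> (z - x))" using b by simp
  have "(1 / (2 * \<beta>)) * (norm (z - x0))\<^sup>2 = (1 / (2 * \<beta>)) * (norm (x - x0))\<^sup>2 + (1 / (2 * \<beta>)) * (norm (z - x))\<^sup>2 + g x \<bullet> (z - x)"
    unfolding n dd using b by (simp add: field_simps)
  then show ?thesis using t by linarith
qed

lemma br_eq:
  fixes f :: "'a::euclidean_space \<Rightarrow> real"
  assumes cv: "concave_on UNIV f" and gd: "\<forall>x. GDERIV f x :> g x"
    and lip: "\<forall>x x'. norm (g x - g x') \<le> L * norm (x - x')"
    and b: "0 < \<beta>" and bl: "\<beta> * L < 1" and L0: "0 \<le> L"
  shows "best_response \<beta> f x0 = x0 + \<beta> *\<^sub>R g (best_response \<beta> f x0)"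
proof -
  have "\<exists>!x. x0 + \<beta> *\<^sub>R g x = x"
  proof (rule banach_fix_type[of "\<beta> * L"])
    show "0 \<le> \<beta> * L" using b L0 by simp
    show "\<beta> * L < 1" by fact
    show "\<forall>x y. dist (x0 + \<beta> *\<^sub>R g x) (x0 + \<beta> *\<^sub>R g y) \<le> \<beta> * L * dist x y"
    proof (intro allI)
      fix x y
      have "dist (x0 + \<beta> *\<^sub>R g x) (x0 + \<beta> *\<^sub>R g y) = \<beta> * norm (g x - g y)"
        using b by (simp add: dist_norm scaleR_diff_right[symmetric])
      also have "\<dots> \<le> \<beta> * (L * norm (x - y))" using lip b by (simp add: mult_left_mono)
      finally show "dist (x0 + \<beta> *\<^sub>R g x) (x0 + \<beta> *\<^sub>R g y) \<le> \<beta> * L * dist x y"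
        by (simp add: dist_norm mult.assoc)
    qed
  qed
  then obtain x where fx: "x = x0 + \<beta> *\<^sub>R g x" by metis
  define obj where "obj = (\<lambda>z. f z - (1 / (2 * \<beta>)) * (norm (z - x0))\<^sup>2)"
  have fm: "obj z \<le> obj x - (1 / (2 * \<beta>)) * (norm (z - x))\<^sup>2" for z
    using fixpoint_max[OF cv gd b fx] unfolding obj_def by blast
  have "\<forall>z. obj z \<le> obj x"
  proof
    fix z show "obj z \<le> obj x" using fm[of z] b by (smt (verit) divide_nonneg_nonneg zero_le_power2 mult_nonneg_nonneg)
  qed
  then have "\<exists>x. \<forall>z. obj z \<le> obj x" by blast
  then have s: "\<forall>z. obj z \<le> obj (best_response \<beta> f x0)"
    unfolding best_response_def obj_def by (rule someI_ex)
  have "(1 / (2 * \<beta>)) * (norm (best_response \<beta> f x0 - x))\<^sup>2 \<le> 0"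
    using fm[of "best_response \<beta> f x0"] s by smt
  then have "(norm (best_response \<beta> f x0 - x))\<^sup>2 \<le> 0" using b
    by (simp add: divide_le_0_iff)
  then have "best_response \<beta> f x0 = x" by simp
  then show ?thesis using fx by simp
qed

lemma br_cont:
  fixes f :: "'a::euclidean_space \<Rightarrow> real"
  assumes cv: "concave_on UNIV f" and gd: "\<forall>x. GDERIV f x :> g x"
    and lip: "\<forall>x x'. norm (g x - g x') \<le> L * norm (x - x')"
    and b: "0 < \<beta>" and bl: "\<beta> * L < 1" and L0: "0 \<le> L"
  shows "continuous_on UNIV (best_response \<beta> f)"
proof (rule lipschitz_on_continuous_on)
  let ?G = "best_response \<beta> f"
  show "(1 / (1 - \<beta> * L))-lipschitz_on UNIV ?G"
  proof (rule lipschitz_onI)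
    show "0 \<le> 1 / (1 - \<beta> * L)" using bl by simp
    fix a c :: 'a
    have ea: "?G a = a + \<beta> *\<^sub>R g (?G a)" by (rule br_eq[OF cv gd lip b bl L0])
    have ec: "?G c = c + \<beta> *\<^sub>R g (?G c)" by (rule br_eq[OF cv gd lip b bl L0])
    have "?G a - ?G c = (a - c) + \<beta> *\<^sub>R (g (?G a) - g (?G c))"
      using ea ec by (metis (no_types, lifting) add_diff_add scaleR_diff_right)
    then have "norm (?G a - ?G c) \<le> norm (a - c) + \<beta> * norm (g (?G a) - g (?G c))"
      using b by (metis abs_of_pos norm_scaleR norm_triangle_ineq)
    also have "\<dots> \<le> norm (a - c) + \<beta> * (L * norm (?G a - ?G c))"
      using lip b by (simp add: mult_left_mono)
    finally have "(1 - \<beta> * L) * norm (?G a - ?G c) \<le> norm (a - c)" by (simp add: algebra_simps)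
    then show "dist (?G a) (?G c) \<le> 1 / (1 - \<beta> * L) * dist a c"
      using bl by (simp add: dist_norm field_simps mult.commute)
  qed
qed

lemma br_diff:
  fixes f :: "'a::euclidean_space \<Rightarrow> real"
  assumes cv: "concave_on UNIV f" and gd: "\<forall>x. GDERIV f x :> g x"
    and lip: "\<forall>x x'. norm (g x - g x') \<le> L * norm (x - x')"
    and bd: "\<forall>x. norm (g x) \<le> B"
    and b: "0 < \<beta>" and bl: "\<beta> * L < 1" and b': "0 < \<beta>'" and bl': "\<beta>' * L < 1" and L0: "0 \<le> L"
  shows "(1 - \<beta>' * L) * norm (best_response \<beta> f x0 - best_response \<beta>' f x0) \<le> B * \<bar>\<beta> - \<beta>'\<bar>"
proof -
  let ?x = "best_response \<beta> f x0" and ?y = "best_response \<beta>' f x0"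
  have ea: "?x = x0 + \<beta> *\<^sub>R g ?x" by (rule br_eq[OF cv gd lip b bl L0])
  have ec: "?y = x0 + \<beta>' *\<^sub>R g ?y" by (rule br_eq[OF cv gd lip b' bl' L0])
  have "?x - ?y = (\<beta> - \<beta>') *\<^sub>R g ?x + \<beta>' *\<^sub>R (g ?x - g ?y)"
    using ea ec by (smt (verit, ccfv_threshold) add_diff_cancel_left add_diff_eq diff_add_cancel scaleR_diff_left scaleR_diff_right)
  then have "norm (?x - ?y) \<le> \<bar>\<beta> - \<beta>'\<bar> * norm (g ?x) + \<beta>' * norm (g ?x - g ?y)"
    using b' by (metis abs_of_pos norm_scaleR norm_triangle_ineq)
  also have "\<dots> \<le> \<bar>\<beta> - \<beta>'\<bar> * B + \<beta>' * (L * norm (?x - ?y))"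
    using lip bd b' by (intro add_mono mult_left_mono) auto
  finally show ?thesis by (simp add: algebra_simps)
qed


theorem claim1:
  fixes u :: "'th \<Rightarrow> 'a::euclidean_space \<Rightarrow> real"
    and grad_u :: "'th \<Rightarrow> 'a \<Rightarrow> 'a"
    and \<Theta> :: "'th set"
    and D0 :: "('a \<times> 'b::euclidean_space) measure"
    and \<beta>min \<beta>max B_u L_u :: real
  assumes "0 < \<beta>min" and "\<beta>min \<le> \<beta>max"
    and "prob_space D0" and "sets D0 = sets borel"
    and "\<forall>\<theta>\<in>\<Theta>. concave_on UNIV (u \<theta>)"
    and "\<forall>\<theta>\<in>\<Theta>. \<forall>x. GDERIV (u \<theta>) x :> grad_u \<theta> x"
    and "\<forall>\<theta>\<in>\<Theta>. \<forall>x. norm (grad_u \<theta> x) \<le> B_u"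
    and "\<forall>\<theta>\<in>\<Theta>. \<forall>x x'. norm (grad_u \<theta> x - grad_u \<theta> x') \<le> L_u * norm (x - x')"
    and "\<beta>max * L_u < 1"
  shows "\<forall>\<beta>\<in>{\<beta>min..\<beta>max}. \<forall>\<beta>'\<in>{\<beta>min..\<beta>max}. \<forall>\<theta>\<in>\<Theta>.
           wasserstein1 (atlas \<beta> (u \<theta>) D0) (atlas \<beta>' (u \<theta>) D0)
             \<le> ennreal (B_u / (1 - \<beta>max * L_u) * \<bar>\<beta> - \<beta>'\<bar>)"
proof (intro ballI)
  fix \<beta> \<beta>' \<theta> assume hb: "\<beta> \<in> {\<beta>min..\<beta>max}" and hb': "\<beta>' \<in> {\<beta>min..\<beta>max}" and ht: "\<theta> \<in> \<Theta>"
  define f where "f = u \<theta>"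
  define g where "g = grad_u \<theta>"
  have cv: "concave_on UNIV f" using assms(5) ht by (simp add: f_def)
  have gd: "\<forall>x. GDERIV f x :> g x" using assms(6) ht by (simp add: f_def g_def)
  have bd: "\<forall>x. norm (g x) \<le> B_u" using assms(7) ht by (simp add: g_def)
  have lip: "\<forall>x x'. norm (g x - g x') \<le> L_u * norm (x - x')" using assms(8) ht by (simp add: g_def)
  obtain e :: 'a where e: "e \<in> Basis" using nonempty_Basis by blast
  have "norm (g e - g 0) \<le> L_u * norm (e - 0)" using lip by blast
  then have L0: "0 \<le> L_u" using e by (smt (verit) mult_cancel_left1 norm_Basis norm_ge_zero diff_zero)
  have B0: "0 \<le> B_u" using bd norm_ge_zero order_trans by blast
  have b: "0 < \<beta>" and b': "0 < \<beta>'" using hb hb' assms(1) by auto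
  have bl: "\<beta> * L_u < 1" using hb L0 assms(9) by (smt (verit) atLeastAtMost_iff mult_right_mono)
  have bl': "\<beta>' * L_u < 1" using hb' L0 assms(9) by (smt (verit) atLeastAtMost_iff mult_right_mono)
  have bm: "1 - \<beta>max * L_u \<le> 1 - \<beta>' * L_u" using hb' L0 by (simp add: mult_right_mono)
  define C where "C = B_u / (1 - \<beta>max * L_u) * \<bar>\<beta> - \<beta>'\<bar>"
  define G where "G = best_response \<beta> f"
  define G' where "G' = best_response \<beta>' f"
  have dG: "norm (G x0 - G' x0) \<le> C" for x0
  proof -
    have "(1 - \<beta>' * L_u) * norm (G x0 - G' x0) \<le> B_u * \<bar>\<beta> - \<beta>'\<bar>"
      unfolding G_def G'_def by (rule br_diff[OF cv gd lip bd b bl b' bl' L0])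
    then have "(1 - \<beta>max * L_u) * norm (G x0 - G' x0) \<le> B_u * \<bar>\<beta> - \<beta>'\<bar>"
      using bm by (smt (verit) mult_right_mono norm_ge_zero)
    then show ?thesis unfolding C_def using assms(9) by (simp add: field_simps)
  qed
  have cG: "continuous_on UNIV G" unfolding G_def by (rule br_cont[OF cv gd lip b bl L0])
  have cG': "continuous_on UNIV G'" unfolding G'_def by (rule br_cont[OF cv gd lip b' bl' L0])
  define F where "F = (\<lambda>p::'a \<times> 'b. ((G (fst p), snd p), (G' (fst p), snd p)))"
  have cF: "continuous_on UNIV F" unfolding F_def
    by (intro continuous_intros continuous_on_compose2[OF cG] continuous_on_compose2[OF cG']) auto
  have mF: "F \<in> D0 \<rightarrow>\<^sub>M borel"
    using borel_measurable_continuous_onI[OF cF] measurable_cong_sets[OF assms(4) refl] by blast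
  have c1: "(\<lambda>p::'a \<times> 'b. (G (fst p), snd p)) \<in> borel \<rightarrow>\<^sub>M borel"
    by (intro borel_measurable_continuous_onI continuous_intros continuous_on_compose2[OF cG]) auto
  have c2: "(\<lambda>p::'a \<times> 'b. (G' (fst p), snd p)) \<in> borel \<rightarrow>\<^sub>M borel"
    by (intro borel_measurable_continuous_onI continuous_intros continuous_on_compose2[OF cG']) auto
  have mfst: "(fst :: ('a \<times> 'b) \<times> ('a \<times> 'b) \<Rightarrow> 'a \<times> 'b) \<in> borel \<rightarrow>\<^sub>M borel"
    by (intro borel_measurable_continuous_onI continuous_on_fst continuous_on_id)
  have msnd: "(snd :: ('a \<times> 'b) \<times> ('a \<times> 'b) \<Rightarrow> 'a \<times> 'b) \<in> borel \<rightarrow>\<^sub>M borel"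
    by (intro borel_measurable_continuous_onI continuous_on_snd continuous_on_id)
  define \<pi> where "\<pi> = distr D0 borel F"
  have "\<pi> \<in> couplings (atlas \<beta> (u \<theta>) D0) (atlas \<beta>' (u \<theta>) D0)"
    unfolding couplings_def
  proof (intro CollectI conjI)
    show "prob_space \<pi>" unfolding \<pi>_def using mF assms(3) by (simp add: prob_space.prob_space_distr)
    show "sets \<pi> = sets borel" by (simp add: \<pi>_def)
    have "distr \<pi> borel fst = distr D0 borel (fst \<circ> F)"
      unfolding \<pi>_def by (rule distr_distr[OF mfst mF]) 
    also have "fst \<circ> F = (\<lambda>(x0, y). (best_response \<beta> (u \<theta>) x0, y))"
      by (auto simp: F_def G_def f_def)
    finally show "distr \<pi> borel fst = atlas \<beta> (u \<theta>) D0" by (simp add: atlas_def)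
    have "distr \<pi> borel snd = distr D0 borel (snd \<circ> F)"
      unfolding \<pi>_def by (rule distr_distr[OF msnd mF]) 
    also have "snd \<circ> F = (\<lambda>(x0, y). (best_response \<beta>' (u \<theta>) x0, y))"
      by (auto simp: F_def G'_def f_def)
    finally show "distr \<pi> borel snd = atlas \<beta>' (u \<theta>) D0" by (simp add: atlas_def)
  qed
  then have "wasserstein1 (atlas \<beta> (u \<theta>) D0) (atlas \<beta>' (u \<theta>) D0) \<le> (\<integral>\<^sup>+ p. ennreal (dist (fst p) (snd p)) \<partial>\<pi>)"
    unfolding wasserstein1_def by (rule INF_lower)
  also have "\<dots> = (\<integral>\<^sup>+ x. ennreal (dist (fst (F x)) (snd (F x))) \<partial>D0)"
  proof -
    have h0: "(\<lambda>p::('a \<times> 'b) \<times> ('a \<times> 'b). dist (fst p) (snd p)) \<in> borel_measurable borel"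
      by (intro borel_measurable_continuous_onI continuous_intros)
    have h1: "(\<lambda>p::('a \<times> 'b) \<times> ('a \<times> 'b). ennreal (dist (fst p) (snd p))) \<in> borel_measurable (distr D0 borel F)"
      using measurable_compose[OF h0 measurable_ennreal] by (simp add: measurable_cong_sets[OF sets_distr refl])
    show ?thesis unfolding \<pi>_def by (rule nn_integral_distr[OF mF h1])
  qed
  also have "\<dots> \<le> (\<integral>\<^sup>+ x. ennreal C \<partial>D0)"
  proof (rule nn_integral_mono)
    fix x
    have "dist (fst (F x)) (snd (F x)) = norm (G (fst x) - G' (fst x))"
      by (simp add: F_def dist_Pair_Pair dist_norm)
    then show "ennreal (dist (fst (F x)) (snd (F x))) \<le> ennreal C" using dG by (simp add: ennreal_leI)
  qed
  also have "\<dots> = ennreal C" using assms(3) by (simp add: prob_space.emeasure_space_1)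
  finally show "wasserstein1 (atlas \<beta> (u \<theta>) D0) (atlas \<beta>' (u \<theta>) D0) \<le> ennreal (B_u / (1 - \<beta>max * L_u) * \<bar>\<beta> - \<beta>'\<bar>)"
    by (simp add: C_def)
qed

end
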